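(* Let $p$ be an odd prime and let $\alpha_0\in\mathbb{Q}_p$ have an infinite Browkin $p$-adic continued fraction expansion $[b_0,b_1,b_2,\ldots]$. Define $A_{-2}=0$, $A_{-1}=1$, $A_i=b_iA_{i-1}+A_{i-2}$ and $B_{-2}=1$, $B_{-1}=0$, $B_i=b_iB_{i-1}+B_{i-2}$ for $i\ge 0$. Then $\lvert A_n\rvert_\infty<\lvert A_n\rvert_p$ and $\lvert B_n\rvert_\infty<\lvert B_n\rvert_p$ for all sufficiently large $n$.
   Context: $\lvert\cdot\rvert_p$ denotes the $p$-adic absolute value and $\lvert\cdot\rvert_\infty$ the usual archimedean absolute value on $\mathbb{Q}$. Every $x\in\mathbb{Q}_p$ has a unique expansion $x=\sum_{i\ge r}a_ip^i$ with $r\in\mathbb{Z}$ and $a_i\in\{-\frac{p-1}{2},\ldots,\frac{p-1}{2}\}$; Browkin's function is $s(x)=\sum_{i=r}^{0}a_ip^i$ (so $s(x)=0$ if $r>0$). The Browkin continued fraction expansion $[b_0,b_1,\ldots]$ of $\alpha_0$ is obtained by iterating $b_i=s(\alpha_i)$ and $\alpha_{i+1}=1/(\alpha_i-b_i)$ as long as $\alpha_i\neq b_i$ (if $\alpha_i=b_i$ the expansion stops). *)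

theory Defs
  imports Complex_Main "HOL-Computational_Algebra.Primes"
begin

definition padic_val :: "nat \<Rightarrow> rat \<Rightarrow> int" where
  "padic_val p q =
     int (multiplicity (int p) (fst (quotient_of q)))
   - int (multiplicity (int p) (snd (quotient_of q)))"

definition padic_abs :: "nat \<Rightarrow> rat \<Rightarrow> real" where
  "padic_abs p q = (if q = 0 then 0 else real p powi (- padic_val p q))"

text \<open>Q_p is modelled as the completion of Q: an element of Q_p is represented by a
  p-adic Cauchy sequence of rationals; two representatives denote the same p-adic
  number iff their difference tends to 0 p-adically.\<close>

definition padic_cauchy :: "nat \<Rightarrow> (nat \<Rightarrow> rat) \<Rightarrow> bool" where
  "padic_cauchy p X \<longleftrightarrow>
     (\<forall>e>0. \<exists>N. \<forall>m\<ge>N. \<forall>n\<ge>N. padic_abs p (X m - X n) < e)"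

definition padic_eq :: "nat \<Rightarrow> (nat \<Rightarrow> rat) \<Rightarrow> (nat \<Rightarrow> rat) \<Rightarrow> bool" where
  "padic_eq p X Y \<longleftrightarrow> (\<lambda>n. padic_abs p (X n - Y n)) \<longlonglongrightarrow> 0"

text \<open>Browkin's function s: if x = sum_{i>=r} a_i p^i with balanced digits
  a_i in {-(p-1)/2, ..., (p-1)/2} (the series converging p-adically to x), then
  s(x) = sum_{i=r}^{0} a_i p^i (an empty sum, i.e. 0, if r > 0).\<close>

definition browkin_s :: "nat \<Rightarrow> (nat \<Rightarrow> rat) \<Rightarrow> rat" where
  "browkin_s p X = (THE c. \<exists>(a::int \<Rightarrow> int) (r::int).
      (\<forall>i. \<bar>a i\<bar> \<le> (int p - 1) div 2) \<and> (\<forall>i<r. a i = 0) \<and>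
      padic_eq p X (\<lambda>n. \<Sum>i\<in>{r..int n}. of_int (a i) * (of_nat p) powi i) \<and>
      c = (\<Sum>i\<in>{r..0}. of_int (a i) * (of_nat p) powi i))"

text \<open>Complete quotients alpha_i (as representatives): alpha_0 = X,
  alpha_{i+1} = 1/(alpha_i - b_i) with b_i = s(alpha_i).  (Pointwise inversion of a
  representative of a nonzero p-adic number represents its inverse.)\<close>

fun browkin_alpha :: "nat \<Rightarrow> (nat \<Rightarrow> rat) \<Rightarrow> nat \<Rightarrow> (nat \<Rightarrow> rat)" where
  "browkin_alpha p X 0 = X"
| "browkin_alpha p X (Suc i) =
     (\<lambda>n. inverse (browkin_alpha p X i n - browkin_s p (browkin_alpha p X i)))"

definition browkin_b :: "nat \<Rightarrow> (nat \<Rightarrow> rat) \<Rightarrow> nat \<Rightarrow> rat" where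
  "browkin_b p X i = browkin_s p (browkin_alpha p X i)"

definition browkin_infinite :: "nat \<Rightarrow> (nat \<Rightarrow> rat) \<Rightarrow> bool" where
  "browkin_infinite p X \<longleftrightarrow>
     (\<forall>i. \<not> padic_eq p (browkin_alpha p X i) (\<lambda>_. browkin_b p X i))"

text \<open>Shifted convergent numerators/denominators:
  cfA b k = A_{k-2}, cfB b k = B_{k-2}.\<close>

fun cfA :: "(nat \<Rightarrow> rat) \<Rightarrow> nat \<Rightarrow> rat" where
  "cfA b 0 = 0"
| "cfA b (Suc 0) = 1"
| "cfA b (Suc (Suc n)) = b n * cfA b (Suc n) + cfA b n"

fun cfB :: "(nat \<Rightarrow> rat) \<Rightarrow> nat \<Rightarrow> rat" where
  "cfB b 0 = 1"
| "cfB b (Suc 0) = 0"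
| "cfB b (Suc (Suc n)) = b n * cfB b (Suc n) + cfB b n"

end

theory Submission
  imports Defs
begin

lemma pv_frac:
  fixes a b :: int
  assumes p: "prime p" and a: "a \<noteq> 0" and b: "b \<noteq> 0"
  shows "padic_val p (of_int a / of_int b) =
         int (multiplicity (int p) a) - int (multiplicity (int p) b)"
proof -
  obtain n d where q: "quotient_of (of_int a / of_int b) = (n, d)" by (cases "quotient_of (of_int a / of_int b)")
  have d: "d > 0" using quotient_of_denom_pos[OF q] .
  have eq: "(of_int a / of_int b :: rat) = of_int n / of_int d" using quotient_of_div[OF q] .
  have n: "n \<noteq> 0" using eq a b d by auto
  have "of_int (a * d) = (of_int (n * b) :: rat)" using eq b d by (simp add: field_simps)
  hence ad: "a * d = n * b" by (simp only: of_int_eq_iff)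
  have pe: "prime_elem (int p)" using p by simp
  have "multiplicity (int p) (a * d) = multiplicity (int p) (n * b)" using ad by simp
  hence "multiplicity (int p) a + multiplicity (int p) d = multiplicity (int p) n + multiplicity (int p) b"
    using prime_elem_multiplicity_mult_distrib[OF pe] a b n d by simp
  thus ?thesis unfolding padic_val_def q by simp
qed

lemma rat_as_frac:
  fixes x :: rat
  obtains a b :: int where "b > 0" "x = of_int a / of_int b" "x \<noteq> 0 \<Longrightarrow> a \<noteq> 0"
proof -
  obtain n d where q: "quotient_of x = (n, d)" by (cases "quotient_of x")
  show ?thesis
    apply (rule that[of d n])
    using quotient_of_denom_pos[OF q] quotient_of_div[OF q] by auto
qed

lemma pv_mult:
  assumes p: "prime p" and x: "x \<noteq> 0" and y: "y \<noteq> 0"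
  shows "padic_val p (x * y) = padic_val p x + padic_val p y"
proof -
  obtain a b where ab: "b > 0" "x = of_int a / of_int b" "a \<noteq> 0" using rat_as_frac[of x] x by metis
  obtain c d where cd: "d > 0" "y = of_int c / of_int d" "c \<noteq> 0" using rat_as_frac[of y] y by metis
  have e: "x * y = of_int (a*c) / of_int (b*d)" using ab cd by simp
  have pe: "prime_elem (int p)" using p by simp
  have "padic_val p (x*y) = int (multiplicity (int p) (a*c)) - int (multiplicity (int p) (b*d))"
    unfolding e by (rule pv_frac[OF p]) (use ab cd in auto)
  also have "\<dots> = padic_val p x + padic_val p y"
    using ab cd pv_frac[OF p, of a b] pv_frac[OF p, of c d]
    by (simp add: prime_elem_multiplicity_mult_distrib[OF pe])
  finally show ?thesis .
qed

lemma pv_inverse: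
  assumes p: "prime p" and x: "x \<noteq> 0"
  shows "padic_val p (inverse x) = - padic_val p x"
proof -
  have "padic_val p (x * inverse x) = 0" using x by (simp add: padic_val_def)
  thus ?thesis using pv_mult[OF p x, of "inverse x"] x by simp
qed

lemma pv_int:
  assumes p: "prime p" and a: "a \<noteq> 0"
  shows "padic_val p (of_int a) = int (multiplicity (int p) a)"
  using pv_frac[OF p a, of 1] by simp

lemma pv_uminus: "padic_val p (- x) = padic_val p x"
proof -
  obtain n d where q: "quotient_of x = (n, d)" by (cases "quotient_of x")
  have "quotient_of (-x) = (-n, d)" using q by (simp add: rat_uminus_code)
  thus ?thesis using q multiplicity_normalize_right[of "int p" "-n"] multiplicity_normalize_right[of "int p" n]
    unfolding padic_val_def by simp
qed

lemma pv_add: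
  assumes p: "prime p" and x: "x \<noteq> 0" and y: "y \<noteq> 0" and xy: "x + y \<noteq> 0"
  shows "padic_val p (x + y) \<ge> min (padic_val p x) (padic_val p y)"
    and "padic_val p x < padic_val p y \<Longrightarrow> padic_val p (x + y) = padic_val p x"
proof -
  obtain a b where ab: "b > 0" "x = of_int a / of_int b" "a \<noteq> 0" using rat_as_frac[of x] x by metis
  obtain c d where cd: "d > 0" "y = of_int c / of_int d" "c \<noteq> 0" using rat_as_frac[of y] y by metis
  have pe: "prime_elem (int p)" using p by simp
  have "p > 1" using p prime_gt_1_nat by blast
  hence nu: "\<not> is_unit (int p)" by simp
  have bd: "b * d \<noteq> 0" using ab cd by simp
  have ex: "x = of_int (a*d) / of_int (b*d)" using ab cd by simp
  have ey: "y = of_int (c*b) / of_int (b*d)" using ab cd by simp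
  have exy: "x + y = of_int (a*d + c*b) / of_int (b*d)" using ab cd by (simp add: field_simps)
  have s0: "a*d + c*b \<noteq> 0" using exy xy by (metis of_int_0 div_0)
  have ad0: "a*d \<noteq> 0" "c*b \<noteq> 0" using ab cd by auto
  have vx: "padic_val p x = int (multiplicity (int p) (a*d)) - int (multiplicity (int p) (b*d))"
    using pv_frac[OF p ad0(1) bd] ex by simp
  have vy: "padic_val p y = int (multiplicity (int p) (c*b)) - int (multiplicity (int p) (b*d))"
    using pv_frac[OF p ad0(2) bd] ey by simp
  have vxy: "padic_val p (x+y) = int (multiplicity (int p) (a*d + c*b)) - int (multiplicity (int p) (b*d))"
    using pv_frac[OF p s0 bd] exy by simp
  let ?m = "min (multiplicity (int p) (a*d)) (multiplicity (int p) (c*b))"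
  have "int p ^ ?m dvd a*d" by (rule multiplicity_dvd') simp
  moreover have "int p ^ ?m dvd c*b" by (rule multiplicity_dvd') simp
  ultimately have "int p ^ ?m dvd a*d + c*b" by simp
  hence "?m \<le> multiplicity (int p) (a*d + c*b)" using multiplicity_geI[OF s0 nu] by blast
  thus "padic_val p (x + y) \<ge> min (padic_val p x) (padic_val p y)" using vx vy vxy by auto
  assume "padic_val p x < padic_val p y"
  hence "multiplicity (int p) (a*d) < multiplicity (int p) (c*b)" using vx vy by simp
  hence "multiplicity (int p) (a*d + c*b) = multiplicity (int p) (a*d)"
    using multiplicity_sum_lt ad0 by blast
  thus "padic_val p (x + y) = padic_val p x" using vx vxy by simp
qed


lemma powi_le_iff:
  fixes a :: real
  assumes "a > 1"
  shows "a powi m \<le> a powi n \<longleftrightarrow> m \<le> n"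
  using power_int_strict_increasing[of n m a] power_int_increasing[of m n a] assms by force

lemma powi_less_iff:
  fixes a :: real
  assumes "a > 1"
  shows "a powi m < a powi n \<longleftrightarrow> m < n"
  using powi_le_iff[OF assms, of n m] by linarith

lemma powi_pos: "(a::real) > 0 \<Longrightarrow> a powi n > 0"
  by (simp add: power_int_def)

context
  fixes p :: nat
  assumes p: "prime p"
begin

lemma p_gt1: "p > 1" using p prime_gt_1_nat by blast
lemma p_gt1_real: "real p > 1" using p_gt1 by simp

lemma pa_nonzero: "x \<noteq> 0 \<Longrightarrow> padic_abs p x = real p powi (- padic_val p x)"
  by (simp add: padic_abs_def)

lemma pa_nonneg: "padic_abs p x \<ge> 0"
  using powi_pos[of "real p"] p_gt1 by (simp add: padic_abs_def less_imp_le)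

lemma pa_pos: "x \<noteq> 0 \<Longrightarrow> padic_abs p x > 0"
  using powi_pos[of "real p"] p_gt1 by (simp add: padic_abs_def)

lemma pa_zero [simp]: "padic_abs p 0 = 0"
  by (simp add: padic_abs_def)

lemma pa_eq0_iff: "padic_abs p x = 0 \<longleftrightarrow> x = 0"
  by (metis less_irrefl pa_pos pa_zero)

lemma pa_mult: "padic_abs p (x * y) = padic_abs p x * padic_abs p y"
proof (cases "x = 0 \<or> y = 0")
  case True thus ?thesis by auto
next
  case False
  hence "padic_val p (x*y) = padic_val p x + padic_val p y" using pv_mult[OF p] by auto
  moreover have "real p powi (- padic_val p x - padic_val p y) =
     real p powi (- padic_val p x) * real p powi (- padic_val p y)"
    using p_gt1 by (intro power_int_diff[THEN trans]) (auto simp: power_int_add power_int_minus field_simps)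
  ultimately show ?thesis using False by (simp add: padic_abs_def)
qed

lemma pa_inverse: "padic_abs p (inverse x) = inverse (padic_abs p x)"
proof (cases "x = 0")
  case True thus ?thesis by simp
next
  case False
  thus ?thesis using pv_inverse[OF p False] by (simp add: padic_abs_def power_int_minus)
qed

lemma pa_uminus: "padic_abs p (- x) = padic_abs p x"
  by (simp add: padic_abs_def pv_uminus)

lemma pa_minus_commute: "padic_abs p (x - y) = padic_abs p (y - x)"
  using pa_uminus[of "x - y"] by simp

lemma pa_ultra: "padic_abs p (x + y) \<le> max (padic_abs p x) (padic_abs p y)"
proof (cases "x = 0 \<or> y = 0 \<or> x + y = 0")
  case True thus ?thesis using pa_nonneg[of x] pa_nonneg[of y] by auto
next
  case False
  hence "padic_val p (x + y) \<ge> min (padic_val p x) (padic_val p y)" using pv_add(1)[OF p] by blast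
  hence "real p powi (- padic_val p (x+y)) \<le> max (real p powi (- padic_val p x)) (real p powi (- padic_val p y))"
    using powi_le_iff[OF p_gt1_real] by (cases "padic_val p x \<le> padic_val p y") (auto simp: max_def)
  thus ?thesis using False by (simp add: padic_abs_def)
qed

lemma pa_strict:
  assumes "padic_abs p y < padic_abs p x"
  shows "padic_abs p (x + y) = padic_abs p x"
proof (cases "y = 0")
  case True thus ?thesis by simp
next
  case False
  have x: "x \<noteq> 0" using assms pa_nonneg[of y] by auto
  have "x + y \<noteq> 0"
  proof
    assume "x + y = 0" hence "y = - x" by (simp add: add_eq_0_iff)
    thus False using assms pa_uminus[of x] by simp
  qed
  moreover have "padic_val p x < padic_val p y"
    using assms x False powi_less_iff[OF p_gt1_real] by (simp add: padic_abs_def)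
  ultimately show ?thesis using pv_add(2)[OF p x False] x by (simp add: padic_abs_def)
qed

lemma pa_strict':
  assumes "padic_abs p y < padic_abs p x"
  shows "padic_abs p (x - y) = padic_abs p x"
  using pa_strict[of "-y" x] assms by (simp add: pa_uminus)

lemma pa_ultra_diff: "padic_abs p (x - z) \<le> max (padic_abs p (x - y)) (padic_abs p (y - z))"
  using pa_ultra[of "x - y" "y - z"] by simp

lemma pa_sum:
  assumes "finite A" "\<And>i. i \<in> A \<Longrightarrow> padic_abs p (f i) \<le> c" "c \<ge> 0"
  shows "padic_abs p (sum f A) \<le> c"
  using assms
proof (induction A rule: finite_induct)
  case empty thus ?case by simp
next
  case (insert a A)
  have m: "max (padic_abs p (f a)) (padic_abs p (sum f A)) \<le> c" using insert by simp
  show ?case using order_trans[OF pa_ultra m] insert(1,2) by simp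
qed

lemma pa_int_le1: "padic_abs p (of_int m) \<le> 1"
proof (cases "m = 0")
  case False
  thus ?thesis using pv_int[OF p False] powi_le_iff[OF p_gt1_real, of "- int (multiplicity (int p) m)" 0]
    by (simp add: padic_abs_def)
qed simp

lemma pv_ppow: "padic_val p ((of_nat p) powi k) = k"
proof -
  have pe: "prime_elem (int p)" using p by simp
  show ?thesis
  proof (cases "k \<ge> 0")
    case True
    hence e: "(of_nat p :: rat) powi k = of_int (int p ^ nat k)" by (simp add: power_int_nonneg_exp)
    have "padic_val p (of_int (int p ^ nat k)) = int (multiplicity (int p) (int p ^ nat k))"
      by (rule pv_int[OF p]) (use p_gt1 in simp)
    also have "multiplicity (int p) (int p ^ nat k) = nat k" using pe by simp
    finally show ?thesis unfolding e using True by simp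
  next
    case False
    hence e: "(of_nat p :: rat) powi k = inverse (of_int (int p ^ nat (-k)))"
      using power_int_minus[of "of_nat p :: rat" "-k"] by (simp add: power_int_nonneg_exp)
    have nz: "int p ^ nat (-k) \<noteq> 0" using p_gt1 by simp
    have "padic_val p (inverse (of_int (int p ^ nat (-k)))) = - padic_val p (of_int (int p ^ nat (-k)))"
      by (rule pv_inverse[OF p]) (use nz in simp)
    also have "padic_val p (of_int (int p ^ nat (-k))) = int (multiplicity (int p) (int p ^ nat (-k)))"
      by (rule pv_int[OF p nz])
    also have "multiplicity (int p) (int p ^ nat (-k)) = nat (-k)" using pe by simp
    finally show ?thesis unfolding e using False by simp
  qed
qed

lemma pa_ppow: "padic_abs p ((of_nat p) powi k) = real p powi (-k)"
proof -
  have "(of_nat p :: rat) powi k \<noteq> 0" using p_gt1 by (simp add: power_int_not_zero)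
  thus ?thesis using pv_ppow by (simp add: padic_abs_def)
qed

lemma pa_le_ppow_iff:
  assumes "x \<noteq> 0"
  shows "padic_abs p x \<le> real p powi (- k) \<longleftrightarrow> padic_val p x \<ge> k"
  using assms powi_le_iff[OF p_gt1_real] by (simp add: padic_abs_def)

lemma pa_lt_ppow_iff:
  assumes "x \<noteq> 0"
  shows "padic_abs p x < real p powi (- k) \<longleftrightarrow> padic_val p x > k"
  using assms powi_less_iff[OF p_gt1_real] by (simp add: padic_abs_def)

lemma pa_discrete:
  assumes "padic_abs p x < real p powi (- k)"
  shows "padic_abs p x \<le> real p powi (- k - 1)"
proof (cases "x = 0")
  case True thus ?thesis using powi_pos[of "real p"] p_gt1 by (simp add: less_imp_le)
next
  case False
  have "padic_val p x \<ge> k + 1" using assms pa_lt_ppow_iff[OF False] by simp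
  hence "padic_abs p x \<le> real p powi (-(k+1))" using pa_le_ppow_iff[OF False] by blast
  moreover have "-(k+1) = -k-1" by simp
  ultimately show ?thesis by metis
qed

lemma pa_int_dvd:
  assumes "padic_abs p (of_int m) \<le> real p powi (- int k)"
  shows "int p ^ k dvd m"
proof (cases "m = 0")
  case False
  hence "padic_val p (of_int m) \<ge> int k" using assms pa_le_ppow_iff[of "of_int m" "int k"] by simp
  hence "k \<le> multiplicity (int p) m" using pv_int[OF p False] by simp
  thus ?thesis by (rule multiplicity_dvd')
qed simp

lemma pa_values: "x \<noteq> 0 \<Longrightarrow> \<exists>k. padic_abs p x = real p powi k"
  using pa_nonzero by blast

end


context
  fixes p :: nat
  assumes p: "prime p" and podd: "odd p"
begin

lemmas [simp] = pa_zero[OF p]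

abbreviation "hp \<equiv> (int p - 1) div 2"

lemma hp_eq: "int p = 2 * hp + 1"
proof -
  obtain k where k: "p = 2 * k + 1" using podd oddE by blast
  thus ?thesis by simp
qed

lemma digit_exists:
  assumes "padic_abs p x \<le> 1"
  shows "\<exists>e. \<bar>e\<bar> \<le> hp \<and> padic_abs p (x - of_int e) \<le> real p powi -1"
proof (cases "x = 0")
  case True
  thus ?thesis using pa_nonneg[OF p] p_gt1[OF p] by (intro exI[of _ 0]) (simp add: power_int_minus)
next
  case False
  obtain a b where q: "quotient_of x = (a, b)" by (cases "quotient_of x")
  have b: "b > 0" using quotient_of_denom_pos[OF q] .
  have xab: "x = of_int a / of_int b" using quotient_of_div[OF q] .
  have cop: "coprime a b" using quotient_of_coprime[OF q] .
  have a: "a \<noteq> 0" using False xab by auto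
  have pe: "prime_elem (int p)" using p by simp
  have p1: "p > 1" using p_gt1[OF p] .
  have "padic_val p x \<ge> 0" using pa_le_ppow_iff[OF p False, of 0] assms by simp
  hence vge: "multiplicity (int p) a \<ge> multiplicity (int p) b"
    using pv_frac[OF p a] b xab by simp
  have nb: "\<not> int p dvd b"
  proof
    assume "int p dvd b"
    hence "multiplicity (int p) b > 0" using b p1 by (simp add: multiplicity_gt_zero_iff)
    hence "multiplicity (int p) a > 0" using vge by simp
    hence "int p dvd a" using a p1 by (simp add: multiplicity_gt_zero_iff)
    with \<open>int p dvd b\<close> cop have "is_unit (int p)" by (meson coprime_common_divisor)
    thus False using p1 by simp
  qed
  have "coprime b (int p)"
    using nb pe by (meson coprime_commute prime_elem_imp_coprime)
  hence "gcd b (int p) = 1" by simp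
  then obtain u v where uv: "u * b + v * int p = 1" using bezout_int[of b "int p"] by metis
  define e1 where "e1 = (a * u) mod int p"
  define e where "e = (if e1 \<le> hp then e1 else e1 - int p)"
  have e1r: "0 \<le> e1" "e1 < int p" using p1 unfolding e1_def by simp_all
  have eb: "\<bar>e\<bar> \<le> hp" using e1r hp_eq unfolding e_def by auto
  have "int p dvd (a * u) - e1" unfolding e1_def by (simp add: mod_eq_dvd_iff minus_mod_eq_mult_div)
  moreover have "a * u - (e1 - int p) = (a * u - e1) + int p" by simp
  ultimately have "int p dvd (a * u) - e" unfolding e_def
    by (cases "e1 \<le> hp") (simp, metis dvd_add dvd_refl)
  then obtain t where t: "a * u - e = int p * t" by blast
  have "a - e * b = a * (u * b + v * int p) - e * b" using uv by simp
  also have "\<dots> = (a * u - e) * b + a * v * int p" by (simp add: algebra_simps)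
  also have "\<dots> = int p * (t * b + a * v)" using t by (simp add: algebra_simps)
  finally have dv: "int p dvd a - e * b" by simp
  have xe: "x - of_int e = of_int (a - e * b) / of_int b" using xab b by (simp add: field_simps)
  have "padic_abs p (x - of_int e) \<le> real p powi -1"
  proof (cases "a - e * b = 0")
    case True thus ?thesis using xe powi_pos[of "real p"] p1 by simp
  next
    case nz: False
    have ne: "x - of_int e \<noteq> 0" unfolding xe using nz b by (simp only: divide_eq_0_iff of_int_eq_0_iff) simp
    have "multiplicity (int p) b = 0" using nb b p1 by (simp add: multiplicity_eq_zero_iff)
    moreover have "multiplicity (int p) (a - e * b) > 0" using dv nz p1 by (simp add: multiplicity_gt_zero_iff)
    ultimately have "padic_val p (x - of_int e) \<ge> 1" using pv_frac[OF p nz] b xe by simp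
    thus ?thesis using pa_le_ppow_iff[OF p ne, of 1] by simp
  qed
  thus ?thesis using eb by blast
qed

lemma digit_unique:
  assumes "\<bar>e\<bar> \<le> hp" "\<bar>e'\<bar> \<le> hp" "padic_abs p (of_int e - of_int e') \<le> real p powi -1"
  shows "e = e'"
proof (rule ccontr)
  assume ne: "e \<noteq> e'"
  have "int p ^ 1 dvd e - e'" using pa_int_dvd[OF p, of "e - e'" 1] assms(3) by simp
  hence "\<bar>int p\<bar> \<le> \<bar>e - e'\<bar>" using dvd_imp_le_int[of "e - e'" "int p"] ne by simp
  thus False using assms(1,2) hp_eq by linarith
qed

lemma pa_div_p: "padic_abs p (x / of_nat p) = real p * padic_abs p x"
proof -
  have "x / of_nat p = x * (of_nat p) powi -1" by (simp add: power_int_minus divide_inverse)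
  thus ?thesis using pa_mult[OF p] pa_ppow[OF p, of "-1"] by (simp add: mult.commute)
qed

lemma cauchy_bounded:
  assumes "padic_cauchy p Y"
  shows "\<exists>R::nat. \<exists>N. \<forall>n\<ge>N. padic_abs p (Y n) \<le> real p powi int R"
proof -
  obtain N where N: "\<forall>m\<ge>N. \<forall>n\<ge>N. padic_abs p (Y m - Y n) < 1"
    using assms unfolding padic_cauchy_def by (meson zero_less_one)
  have p1: "real p > 1" using p_gt1_real[OF p] .
  obtain R :: nat where R: "padic_abs p (Y N) \<le> real p powi int R"
  proof (cases "Y N = 0")
    case True thus ?thesis using that[of 0] by simp
  next
    case False
    then obtain k where k: "padic_abs p (Y N) = real p powi k" using pa_values[OF p] by blast
    have "real p powi k \<le> real p powi int (nat k)" using powi_le_iff[OF p1] by simp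
    thus ?thesis using that[of "nat k"] k by simp
  qed
  have one: "1 \<le> real p powi int R" using powi_le_iff[OF p1, of 0 "int R"] by simp
  have "\<forall>n\<ge>N. padic_abs p (Y n) \<le> real p powi int R"
  proof (intro allI impI)
    fix n assume "n \<ge> N"
    hence "padic_abs p (Y n - Y N) < 1" using N by simp
    moreover have "padic_abs p (Y n) \<le> max (padic_abs p (Y n - Y N)) (padic_abs p (Y N))"
      using pa_ultra[OF p, of "Y n - Y N" "Y N"] by simp
    ultimately show "padic_abs p (Y n) \<le> real p powi int R" using R one by linarith
  qed
  thus ?thesis by blast
qed

definition edig :: "(nat \<Rightarrow> rat) \<Rightarrow> int" where
  "edig S = (SOME e. \<bar>e\<bar> \<le> hp \<and> (\<exists>N. \<forall>n\<ge>N. padic_abs p (S n - of_int e) \<le> real p powi -1))"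

lemma edig_spec:
  assumes "padic_cauchy p S" "\<exists>N. \<forall>n\<ge>N. padic_abs p (S n) \<le> 1"
  shows "\<bar>edig S\<bar> \<le> hp \<and> (\<exists>N. \<forall>n\<ge>N. padic_abs p (S n - of_int (edig S)) \<le> real p powi -1)"
proof -
  have p1: "real p > 1" using p_gt1_real[OF p] .
  obtain N1 where N1: "\<forall>n\<ge>N1. padic_abs p (S n) \<le> 1" using assms(2) by blast
  have "real p powi -1 > 0" using powi_pos p1 by simp
  then obtain N2 where N2: "\<forall>m\<ge>N2. \<forall>n\<ge>N2. padic_abs p (S m - S n) < real p powi -1"
    using assms(1) unfolding padic_cauchy_def by blast
  define M where "M = max N1 N2"
  obtain e where e: "\<bar>e\<bar> \<le> hp" "padic_abs p (S M - of_int e) \<le> real p powi -1"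
    using digit_exists[of "S M"] N1 M_def by auto
  have "\<forall>n\<ge>M. padic_abs p (S n - of_int e) \<le> real p powi -1"
  proof (intro allI impI)
    fix n assume "n \<ge> M"
    hence "padic_abs p (S n - S M) < real p powi -1" using N2 M_def by simp
    thus "padic_abs p (S n - of_int e) \<le> real p powi -1"
      using pa_ultra_diff[OF p, of "S n" "of_int e" "S M"] e(2) by linarith
  qed
  hence "\<exists>e. \<bar>e\<bar> \<le> hp \<and> (\<exists>N. \<forall>n\<ge>N. padic_abs p (S n - of_int e) \<le> real p powi -1)"
    using e(1) by blast
  thus ?thesis unfolding edig_def by (rule someI_ex)
qed

fun Wseq :: "(nat \<Rightarrow> rat) \<Rightarrow> nat \<Rightarrow> nat \<Rightarrow> rat" where
  "Wseq S 0 = S"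
| "Wseq S (Suc k) = (\<lambda>n. (Wseq S k n - of_int (edig (Wseq S k))) / of_nat p)"

lemma W_good:
  assumes "padic_cauchy p S" "\<exists>N. \<forall>n\<ge>N. padic_abs p (S n) \<le> 1"
  shows "padic_cauchy p (Wseq S k) \<and> (\<exists>N. \<forall>n\<ge>N. padic_abs p (Wseq S k n) \<le> 1)"
proof (induction k)
  case 0 thus ?case using assms by simp
next
  case (Suc k)
  let ?W = "Wseq S k" and ?e = "edig (Wseq S k)"
  have sp: "\<bar>?e\<bar> \<le> hp" "\<exists>N. \<forall>n\<ge>N. padic_abs p (?W n - of_int ?e) \<le> real p powi -1"
    using edig_spec[of ?W] Suc by auto
  have p0: "real p > 0" using p_gt1[OF p] by simp
  have c: "padic_cauchy p (Wseq S (Suc k))"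
    unfolding padic_cauchy_def
  proof (intro allI impI)
    fix \<epsilon> :: real assume "\<epsilon> > 0"
    hence "\<epsilon> / real p > 0" using p0 by simp
    then obtain N where N: "\<forall>m\<ge>N. \<forall>n\<ge>N. padic_abs p (?W m - ?W n) < \<epsilon> / real p"
      using Suc unfolding padic_cauchy_def by blast
    have "\<forall>m\<ge>N. \<forall>n\<ge>N. padic_abs p (Wseq S (Suc k) m - Wseq S (Suc k) n) < \<epsilon>"
    proof (intro allI impI)
      fix m n assume "m \<ge> N" "n \<ge> N"
      have "Wseq S (Suc k) m - Wseq S (Suc k) n = (?W m - ?W n) / of_nat p"
        by (simp add: diff_divide_distrib)
      hence "padic_abs p (Wseq S (Suc k) m - Wseq S (Suc k) n) = real p * padic_abs p (?W m - ?W n)"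
        using pa_div_p by simp
      also have "\<dots> < real p * (\<epsilon> / real p)" using N \<open>m \<ge> N\<close> \<open>n \<ge> N\<close> p0
        by (intro mult_strict_left_mono) auto
      finally show "padic_abs p (Wseq S (Suc k) m - Wseq S (Suc k) n) < \<epsilon>" using p0 by simp
    qed
    thus "\<exists>N. \<forall>m\<ge>N. \<forall>n\<ge>N. padic_abs p (Wseq S (Suc k) m - Wseq S (Suc k) n) < \<epsilon>" by blast
  qed
  obtain N where N: "\<forall>n\<ge>N. padic_abs p (?W n - of_int ?e) \<le> real p powi -1" using sp(2) by blast
  have "\<forall>n\<ge>N. padic_abs p (Wseq S (Suc k) n) \<le> 1"
  proof (intro allI impI)
    fix n assume "n \<ge> N"
    have "padic_abs p (Wseq S (Suc k) n) = real p * padic_abs p (?W n - of_int ?e)"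
      using pa_div_p by simp
    also have "\<dots> \<le> real p * real p powi -1" using N \<open>n \<ge> N\<close> p0 by (intro mult_left_mono) auto
    also have "\<dots> = 1" using p0 by (simp add: power_int_minus)
    finally show "padic_abs p (Wseq S (Suc k) n) \<le> 1" .
  qed
  thus ?case using c by blast
qed

lemma W_expand:
  "S n = (\<Sum>j<K. of_int (edig (Wseq S j)) * of_nat p ^ j) + of_nat p ^ K * Wseq S K n"
proof (induction K)
  case 0 thus ?case by simp
next
  case (Suc K)
  have p0: "(of_nat p :: rat) \<noteq> 0" using p_gt1[OF p] by simp
  define e where "e = (of_int (edig (Wseq S K)) :: rat)"
  have h: "of_nat p * Wseq S (Suc K) n = Wseq S K n - e"
    using p0 unfolding e_def by simp
  have "(\<Sum>j<Suc K. of_int (edig (Wseq S j)) * of_nat p ^ j) + of_nat p ^ Suc K * Wseq S (Suc K) n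
     = (\<Sum>j<K. of_int (edig (Wseq S j)) * of_nat p ^ j) + e * of_nat p ^ K + of_nat p ^ K * (of_nat p * Wseq S (Suc K) n)"
    unfolding e_def by (simp add: algebra_simps)
  also have "\<dots> = (\<Sum>j<K. of_int (edig (Wseq S j)) * of_nat p ^ j) + of_nat p ^ K * Wseq S K n"
    unfolding h by (simp add: algebra_simps)
  finally show ?case using Suc by simp
qed

end


lemma sum_reindex_shift:
  "(\<Sum>i\<in>{-int R..int n}. f i) = (\<Sum>j<n+R+1. f (int j - int R))"
  by (rule sum.reindex_bij_witness[where i="\<lambda>j. int j - int R" and j="\<lambda>i. nat (i + int R)"]) auto

context
  fixes p :: nat
  assumes p: "prime p" and podd: "odd p"
begin

lemmas [simp] = pa_zero[OF p]

lemma p0r: "real p > 0" using p_gt1[OF p] by simp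
lemma p1r: "real p > 1" using p_gt1[OF p] by simp

lemma small_pow: "\<epsilon> > 0 \<Longrightarrow> \<exists>K::nat. real p powi (- int K) < \<epsilon>"
proof -
  assume "\<epsilon> > 0"
  moreover have "1 / real p < 1" using p1r by simp
  ultimately obtain K where "(1 / real p) ^ K < \<epsilon>" using real_arch_pow_inv by blast
  moreover have "(1 / real p) ^ K = real p powi (- int K)"
    by (simp add: power_int_minus power_one_over inverse_eq_divide)
  ultimately show ?thesis by auto
qed

lemma pa_ppow_nat: "padic_abs p (of_nat p ^ k) = real p powi (- int k)"
  using pa_ppow[OF p, of "int k"] by simp

lemma conv_T:
  assumes S: "padic_cauchy p S" "\<exists>N. \<forall>n\<ge>N. padic_abs p (S n) \<le> 1"
  shows "\<exists>N. \<forall>n\<ge>N. \<forall>m\<ge>K. padic_abs p (S n - (\<Sum>j<m. of_int (edig p (Wseq p S j)) * of_nat p ^ j))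
            \<le> real p powi (- int K)"
proof -
  let ?e = "\<lambda>j. of_int (edig p (Wseq p S j)) :: rat"
  obtain N where N: "\<forall>n\<ge>N. padic_abs p (Wseq p S K n) \<le> 1" using W_good[OF p podd S, of K] by blast
  have pk: "real p powi (- int K) \<ge> 0" using powi_pos[of "real p"] p0r by (simp add: less_imp_le)
  have "\<forall>n\<ge>N. \<forall>m\<ge>K. padic_abs p (S n - (\<Sum>j<m. ?e j * of_nat p ^ j)) \<le> real p powi (- int K)"
  proof (intro allI impI)
    fix n m assume n: "n \<ge> N" and m: "m \<ge> K"
    have split: "(\<Sum>j<m. ?e j * of_nat p ^ j) = (\<Sum>j<K. ?e j * of_nat p ^ j) + (\<Sum>j\<in>{K..<m}. ?e j * of_nat p ^ j)"
      using sum.atLeastLessThan_concat[of 0 K m "\<lambda>j. ?e j * of_nat p ^ j"] m by (simp add: atLeast0LessThan)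
    have ex: "S n = (\<Sum>j<K. ?e j * of_nat p ^ j) + of_nat p ^ K * Wseq p S K n"
      using W_expand[OF p podd] by blast
    have d: "S n - (\<Sum>j<m. ?e j * of_nat p ^ j) = of_nat p ^ K * Wseq p S K n + (- (\<Sum>j\<in>{K..<m}. ?e j * of_nat p ^ j))"
      using split ex by simp
    have a1: "padic_abs p (of_nat p ^ K * Wseq p S K n) \<le> real p powi (- int K)"
      using N n pa_mult[OF p] pa_ppow_nat pk by (simp add: mult_left_le)
    have a2: "padic_abs p (- (\<Sum>j\<in>{K..<m}. ?e j * of_nat p ^ j)) \<le> real p powi (- int K)"
      unfolding pa_uminus[OF p]
    proof (rule pa_sum[OF p])
      fix j assume j: "j \<in> {K..<m}"
      have "padic_abs p (?e j * of_nat p ^ j) = padic_abs p (?e j) * real p powi (- int j)"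
        using pa_mult[OF p] pa_ppow_nat by simp
      also have "\<dots> \<le> 1 * real p powi (- int j)"
        using pa_int_le1[OF p] powi_pos[of "real p"] p0r by (intro mult_right_mono) (auto simp: less_imp_le)
      also have "\<dots> \<le> real p powi (- int K)" using j powi_le_iff[OF p1r] by simp
      finally show "padic_abs p (?e j * of_nat p ^ j) \<le> real p powi (- int K)" .
    qed (use pk in auto)
    show "padic_abs p (S n - (\<Sum>j<m. ?e j * of_nat p ^ j)) \<le> real p powi (- int K)"
      unfolding d using pa_ultra[OF p] a1 a2 by (meson max.boundedI order_trans)
  qed
  thus ?thesis by blast
qed

definition Pred :: "(nat \<Rightarrow> rat) \<Rightarrow> rat \<Rightarrow> bool" where
  "Pred Y c \<longleftrightarrow> (\<exists>(a::int \<Rightarrow> int) (r::int).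
      (\<forall>i. \<bar>a i\<bar> \<le> (int p - 1) div 2) \<and> (\<forall>i<r. a i = 0) \<and>
      padic_eq p Y (\<lambda>n. \<Sum>i\<in>{r..int n}. of_int (a i) * (of_nat p) powi i) \<and>
      c = (\<Sum>i\<in>{r..0}. of_int (a i) * (of_nat p) powi i))"

lemma browkin_s_Pred: "browkin_s p Y = (THE c. Pred Y c)"
  unfolding browkin_s_def Pred_def by simp

lemma Pred_exists:
  assumes Y: "padic_cauchy p Y"
  shows "\<exists>c. Pred Y c"
proof -
  obtain R :: nat and N0 where R: "\<forall>n\<ge>N0. padic_abs p (Y n) \<le> real p powi int R"
    using cauchy_bounded[OF p podd Y] by blast
  define Z where "Z = (\<lambda>n. Y n * of_nat p ^ R)"
  have paZ: "padic_abs p (Z n - Z m) = padic_abs p (Y n - Y m) * real p powi (- int R)" for n m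
    unfolding Z_def using pa_mult[OF p, of "Y n - Y m" "of_nat p ^ R"] pa_ppow_nat
    by (simp add: algebra_simps)
  have le1: "real p powi (- int R) \<le> 1" using powi_le_iff[OF p1r, of "- int R" 0] by simp
  have pos: "real p powi (- int R) > 0" using powi_pos p0r by blast
  have Zc: "padic_cauchy p Z"
    unfolding padic_cauchy_def
  proof (intro allI impI)
    fix \<epsilon> :: real assume "\<epsilon> > 0"
    then obtain N where N: "\<forall>m\<ge>N. \<forall>n\<ge>N. padic_abs p (Y m - Y n) < \<epsilon>"
      using Y unfolding padic_cauchy_def by blast
    have "\<forall>m\<ge>N. \<forall>n\<ge>N. padic_abs p (Z m - Z n) < \<epsilon>"
    proof (intro allI impI)
      fix m n assume "m \<ge> N" "n \<ge> N"
      hence "padic_abs p (Y m - Y n) < \<epsilon>" using N by blast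
      moreover have "padic_abs p (Y m - Y n) * real p powi (- int R) \<le> padic_abs p (Y m - Y n)"
        using le1 pa_nonneg[OF p] by (simp add: mult_left_le)
      ultimately show "padic_abs p (Z m - Z n) < \<epsilon>" using paZ by simp
    qed
    thus "\<exists>N. \<forall>m\<ge>N. \<forall>n\<ge>N. padic_abs p (Z m - Z n) < \<epsilon>" by blast
  qed
  have Zb: "\<exists>N. \<forall>n\<ge>N. padic_abs p (Z n) \<le> 1"
  proof (intro exI allI impI)
    fix n assume "n \<ge> N0"
    have "padic_abs p (Z n) = padic_abs p (Y n) * real p powi (- int R)"
      unfolding Z_def using pa_mult[OF p] pa_ppow_nat by simp
    also have "\<dots> \<le> real p powi int R * real p powi (- int R)"
      using R \<open>n \<ge> N0\<close> pos by (intro mult_right_mono) auto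
    also have "\<dots> = 1" using p0r by (simp add: power_int_minus)
    finally show "padic_abs p (Z n) \<le> 1" .
  qed
  define e where "e = (\<lambda>j. edig p (Wseq p Z j))"
  have eb: "\<bar>e j\<bar> \<le> hp p" for j
    using edig_spec[OF p podd, of "Wseq p Z j"] W_good[OF p podd Zc Zb, of j] unfolding e_def by blast
  define T where "T = (\<lambda>m. \<Sum>j<m. of_int (e j) * (of_nat p ^ j :: rat))"
  define a where "a = (\<lambda>i. if i < - int R then 0 else e (nat (i + int R)))"
  define r where "r = - int R"
  have ab: "\<forall>i. \<bar>a i\<bar> \<le> (int p - 1) div 2" unfolding a_def using eb p_gt1[OF p] by simp
  have a0: "\<forall>i<r. a i = 0" unfolding a_def r_def by simp
  have pp0: "(of_nat p :: rat) \<noteq> 0" using p_gt1[OF p] by simp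
  have sumeq: "(\<Sum>i\<in>{r..int n}. of_int (a i) * (of_nat p) powi i) = T (n+R+1) * (of_nat p) powi (- int R)" for n
  proof -
    have "(\<Sum>i\<in>{r..int n}. of_int (a i) * (of_nat p :: rat) powi i)
        = (\<Sum>j<n+R+1. of_int (a (int j - int R)) * (of_nat p :: rat) powi (int j - int R))"
      unfolding r_def by (rule sum_reindex_shift)
    also have "\<dots> = (\<Sum>j<n+R+1. of_int (e j) * of_nat p ^ j * (of_nat p :: rat) powi (- int R))"
    proof (rule sum.cong)
      fix j assume "j \<in> {..<n+R+1}"
      have "a (int j - int R) = e j" unfolding a_def by simp
      moreover have "(of_nat p::rat) powi (int j - int R) = of_nat p ^ j * of_nat p powi (- int R)"
        using power_int_add[of "of_nat p :: rat" "int j" "- int R"] pp0 by simp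
      ultimately show "of_int (a (int j - int R)) * (of_nat p :: rat) powi (int j - int R)
          = of_int (e j) * of_nat p ^ j * (of_nat p :: rat) powi (- int R)" by simp
    qed simp
    also have "\<dots> = T (n+R+1) * (of_nat p) powi (- int R)"
      unfolding T_def by (rule sum_distrib_right[symmetric])
    finally show ?thesis .
  qed
  have conv: "padic_eq p Y (\<lambda>n. \<Sum>i\<in>{r..int n}. of_int (a i) * (of_nat p) powi i)"
    unfolding padic_eq_def
  proof (rule LIMSEQ_I)
    fix \<epsilon> :: real assume "\<epsilon> > 0"
    hence "\<epsilon> * real p powi (- int R) > 0" using pos by simp
    then obtain K where K: "real p powi (- int K) < \<epsilon> * real p powi (- int R)" using small_pow by blast
    obtain N where N: "\<forall>n\<ge>N. \<forall>m\<ge>K. padic_abs p (Z n - T m) \<le> real p powi (- int K)"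
      using conv_T[OF Zc Zb, of K] unfolding T_def e_def by blast
    have "\<forall>n\<ge>max N K. norm (padic_abs p (Y n - (\<Sum>i\<in>{r..int n}. of_int (a i) * (of_nat p) powi i)) - 0) < \<epsilon>"
    proof (intro allI impI)
      fix n assume n: "n \<ge> max N K"
      have "Y n - (\<Sum>i\<in>{r..int n}. of_int (a i) * (of_nat p) powi i) = (Z n - T (n+R+1)) * (of_nat p) powi (- int R)"
      proof -
        have "Y n = Z n * of_nat p powi (- int R)" unfolding Z_def using pp0 by (simp add: power_int_minus)
        thus ?thesis unfolding sumeq by (simp add: left_diff_distrib)
      qed
      hence "padic_abs p (Y n - (\<Sum>i\<in>{r..int n}. of_int (a i) * (of_nat p) powi i))
           = padic_abs p (Z n - T (n+R+1)) * real p powi int R"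
        using pa_mult[OF p] pa_ppow[OF p, of "- int R"] by simp
      also have "\<dots> \<le> real p powi (- int K) * real p powi int R"
        using N n powi_pos[of "real p" "int R"] p0r by (intro mult_right_mono) auto
      also have "\<dots> < \<epsilon> * real p powi (- int R) * real p powi int R"
        using K powi_pos[of "real p" "int R"] p0r by (intro mult_strict_right_mono) auto
      also have "\<dots> = \<epsilon>" using p0r by (simp add: power_int_minus)
      finally show "norm (padic_abs p (Y n - (\<Sum>i\<in>{r..int n}. of_int (a i) * (of_nat p) powi i)) - 0) < \<epsilon>"
        using pa_nonneg[OF p] by simp
    qed
    thus "\<exists>no. \<forall>n\<ge>no. norm (padic_abs p (Y n - (\<Sum>i\<in>{r..int n}. of_int (a i) * (of_nat p) powi i)) - 0) < \<epsilon>"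
      by blast
  qed
  show ?thesis unfolding Pred_def using ab a0 conv by blast
qed

end


context
  fixes p :: nat
  assumes p: "prime p" and podd: "odd p"
begin

lemmas [simp] = pa_zero[OF p]

lemma p0r': "real p > 0" using p_gt1[OF p] by simp
lemma p1r': "real p > 1" using p_gt1[OF p] by simp
lemma p3: "p \<ge> 3"
proof -
  obtain k where k: "p = 2 * k + 1" using podd oddE by blast
  thus ?thesis using p_gt1[OF p] by simp
qed

lemma Pred_G1:
  assumes "Pred p Y c"
  shows "\<exists>R::nat. \<exists>m::int. c * of_nat p ^ R = of_int m"
proof -
  obtain a r where ar: "\<forall>i<r. a i = 0"
    "c = (\<Sum>i\<in>{r..0}. of_int (a i) * (of_nat p :: rat) powi i)"
    using assms unfolding Pred_def[OF p podd] by blast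
  have pp0: "(of_nat p :: rat) \<noteq> 0" using p_gt1[OF p] by simp
  define R where "R = nat (- r)"
  have "c * of_nat p ^ R = (\<Sum>i\<in>{r..0}. of_int (a i) * (of_nat p :: rat) powi i * of_nat p ^ R)"
    unfolding ar(2) by (rule sum_distrib_right)
  also have "\<dots> = (\<Sum>i\<in>{r..0}. of_int (a i * int p ^ nat (i + int R)))"
  proof (rule sum.cong)
    fix i assume i: "i \<in> {r..0}"
    have "(of_nat p :: rat) powi i * of_nat p ^ R = of_nat p powi (i + int R)"
      using power_int_add[of "of_nat p :: rat" i "int R"] pp0 by simp
    also have "\<dots> = of_nat p ^ nat (i + int R)" using i R_def by (simp add: power_int_nonneg_exp)
    finally show "of_int (a i) * (of_nat p :: rat) powi i * of_nat p ^ R = of_int (a i * int p ^ nat (i + int R))"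
      by simp
  qed simp
  also have "\<dots> = of_int (\<Sum>i\<in>{r..0}. a i * int p ^ nat (i + int R))" by simp
  finally show ?thesis by blast
qed

lemma geo_bound: "(\<Sum>i\<in>{r..0}. (of_nat p :: rat) powi i) < of_nat p / (of_nat p - 1)"
proof -
  have pp: "(of_nat p :: rat) > 1" using p_gt1[OF p] by simp
  let ?x = "1 / (of_nat p :: rat)"
  have inj: "inj_on (\<lambda>i::int. nat (- i)) {r..0}" by (auto simp: inj_on_def)
  have "(\<Sum>i\<in>{r..0}. (of_nat p :: rat) powi i) = (\<Sum>i\<in>{r..0}. ?x ^ (nat (- i)))"
  proof (rule sum.cong)
    fix i :: int assume "i \<in> {r..0}"
    hence "i = - int (nat (-i))" by simp
    hence "(of_nat p :: rat) powi i = inverse (of_nat p ^ nat (-i))"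
      by (metis power_int_minus power_int_of_nat)
    thus "(of_nat p :: rat) powi i = ?x ^ (nat (- i))" by (simp add: power_one_over inverse_eq_divide)
  qed simp
  also have "\<dots> = (\<Sum>j\<in>(\<lambda>i. nat (- i)) ` {r..0}. ?x ^ j)" using sum.reindex[OF inj, of "\<lambda>j. ?x ^ j"] by simp
  also have "\<dots> < 1 / (1 - ?x)" by (rule geometric_sum_less) (use pp in auto)
  also have "1 / (1 - ?x) = of_nat p / (of_nat p - 1)" using pp by (simp add: field_simps)
  finally show ?thesis .
qed

lemma Pred_G2:
  assumes "Pred p Y c"
  shows "\<bar>c\<bar> < of_nat p / 2"
proof -
  obtain a r where ar: "\<forall>i. \<bar>a i\<bar> \<le> (int p - 1) div 2"
    "c = (\<Sum>i\<in>{r..0}. of_int (a i) * (of_nat p :: rat) powi i)"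
    using assms unfolding Pred_def[OF p podd] by blast
  have pp: "(of_nat p :: rat) > 1" using p_gt1[OF p] by simp
  define h where "h = (of_nat p - 1) / (2::rat)"
  have "rat_of_int (int p) = rat_of_int (2 * ((int p - 1) div 2) + 1)" using hp_eq[OF p podd] by simp
  hence hh: "of_int ((int p - 1) div 2) = h" unfolding h_def by simp
  have hpos: "h > 0" using p3 unfolding h_def by simp
  have "\<bar>c\<bar> \<le> (\<Sum>i\<in>{r..0}. \<bar>of_int (a i) * (of_nat p :: rat) powi i\<bar>)"
    unfolding ar(2) by (rule sum_abs)
  also have "\<dots> \<le> (\<Sum>i\<in>{r..0}. h * (of_nat p :: rat) powi i)"
  proof (rule sum_mono)
    fix i assume "i \<in> {r..0}"
    have "\<bar>of_int (a i) :: rat\<bar> \<le> h" using ar(1) hh by (metis of_int_abs of_int_le_iff)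
    moreover have "(of_nat p :: rat) powi i > 0" using pp by (simp add: power_int_def)
    ultimately show "\<bar>of_int (a i) * (of_nat p :: rat) powi i\<bar> \<le> h * (of_nat p :: rat) powi i"
      by (simp add: abs_mult mult_right_mono)
  qed
  also have "\<dots> = h * (\<Sum>i\<in>{r..0}. (of_nat p :: rat) powi i)" by (simp add: sum_distrib_left)
  also have "\<dots> < h * (of_nat p / (of_nat p - 1))" using geo_bound hpos by (intro mult_strict_left_mono)
  also have "\<dots> = of_nat p / 2" unfolding h_def using pp by (simp add: field_simps)
  finally show ?thesis .
qed

lemma Pred_G3:
  assumes "Pred p Y c"
  shows "\<exists>N. \<forall>n\<ge>N. padic_abs p (Y n - c) \<le> real p powi -1"
proof -
  obtain a r where ar: "padic_eq p Y (\<lambda>n. \<Sum>i\<in>{r..int n}. of_int (a i) * (of_nat p) powi i)"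
    "c = (\<Sum>i\<in>{r..0}. of_int (a i) * (of_nat p :: rat) powi i)"
    using assms unfolding Pred_def[OF p podd] by blast
  let ?T = "\<lambda>n. \<Sum>i\<in>{r..int n}. of_int (a i) * (of_nat p :: rat) powi i"
  have pm: "real p powi -1 > 0" using powi_pos p0r' by blast
  obtain N where N: "\<forall>n\<ge>N. norm (padic_abs p (Y n - ?T n) - 0) < real p powi -1"
    using LIMSEQ_D[OF ar(1)[unfolded padic_eq_def] pm] by blast
  have "\<forall>n\<ge>N. padic_abs p (Y n - c) \<le> real p powi -1"
  proof (intro allI impI)
    fix n assume n: "n \<ge> N"
    have y: "padic_abs p (Y n - ?T n) \<le> real p powi -1" using N n pa_nonneg[OF p] by (simp add: less_imp_le)
    have sub: "{r..0} \<subseteq> {r..int n}" by auto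
    have "?T n - c = (\<Sum>i\<in>{r..int n} - {r..0}. of_int (a i) * (of_nat p :: rat) powi i)"
      unfolding ar(2) using sum.subset_diff[OF sub, of "\<lambda>i. of_int (a i) * (of_nat p :: rat) powi i"] by simp
    moreover have "padic_abs p (\<Sum>i\<in>{r..int n} - {r..0}. of_int (a i) * (of_nat p :: rat) powi i) \<le> real p powi -1"
    proof (rule pa_sum[OF p])
      fix i assume i: "i \<in> {r..int n} - {r..0}"
      hence i1: "i \<ge> 1" by auto
      have "padic_abs p (of_int (a i) * (of_nat p :: rat) powi i) = padic_abs p (of_int (a i)) * real p powi (- i)"
        using pa_mult[OF p] pa_ppow[OF p] by simp
      also have "\<dots> \<le> 1 * real p powi (- i)"
        using pa_int_le1[OF p] powi_pos[of "real p"] p0r' by (intro mult_right_mono) (auto simp: less_imp_le)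
      also have "\<dots> \<le> real p powi -1" by (simp only: mult_1 powi_le_iff[OF p1r']) (use i1 in linarith)
      finally show "padic_abs p (of_int (a i) * (of_nat p :: rat) powi i) \<le> real p powi -1" .
    qed (use pm in auto)
    ultimately have t: "padic_abs p (?T n - c) \<le> real p powi -1" by simp
    show "padic_abs p (Y n - c) \<le> real p powi -1"
      using pa_ultra_diff[OF p, of "Y n" c "?T n"] y t by linarith
  qed
  thus ?thesis by blast
qed

lemma key_zero:
  fixes z :: rat and m :: int
  assumes "z * of_nat p ^ R = of_int m" "\<bar>z\<bar> < of_nat p" "padic_abs p z \<le> real p powi -1"
  shows "z = 0"
proof (rule ccontr)
  assume z: "z \<noteq> 0"
  have pp0: "(of_nat p :: rat) > 0" using p_gt1[OF p] by simp
  have m: "m \<noteq> 0"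
  proof
    assume "m = 0" hence "z * of_nat p ^ R = 0" using assms(1) by simp
    thus False using z pp0 by simp
  qed
  have "padic_abs p (of_int m) = padic_abs p z * real p powi (- int R)"
    using assms(1)[symmetric] pa_mult[OF p] pa_ppow_nat[OF p podd] by simp
  also have "\<dots> \<le> real p powi -1 * real p powi (- int R)"
    using assms(3) powi_pos[of "real p"] p0r' by (intro mult_right_mono) (auto simp: less_imp_le)
  also have "\<dots> = real p powi (- int (R + 1))"
    using power_int_add[of "real p" "-1" "- int R"] p0r' by (simp add: add.commute)
  finally have "int p ^ (R+1) dvd m" by (rule pa_int_dvd[OF p])
  hence "\<bar>int p ^ (R+1)\<bar> \<le> \<bar>m\<bar>" using dvd_imp_le_int m by blast
  hence "(of_int (int p ^ (R+1)) :: rat) \<le> of_int \<bar>m\<bar>" by (simp only: of_int_le_iff)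
  hence "(of_nat p :: rat) * of_nat p ^ R \<le> \<bar>of_int m\<bar>" by simp
  moreover have "\<bar>of_int m :: rat\<bar> = \<bar>z * of_nat p ^ R\<bar>" using assms(1) by simp
  moreover have "\<bar>z * of_nat p ^ R\<bar> = \<bar>z\<bar> * of_nat p ^ R" using pp0 by (simp add: abs_mult)
  ultimately have "(of_nat p :: rat) * of_nat p ^ R \<le> \<bar>z\<bar> * of_nat p ^ R" by simp
  moreover have "\<bar>z\<bar> * of_nat p ^ R < of_nat p * of_nat p ^ R" using assms(2) pp0 by simp
  ultimately show False by linarith
qed

lemma Pred_unique:
  assumes "Pred p Y c" "Pred p Y c'"
  shows "c = c'"
proof -
  obtain R1 m1 where 1: "c * of_nat p ^ R1 = of_int m1" using Pred_G1[OF assms(1)] by blast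
  obtain R2 m2 where 2: "c' * of_nat p ^ R2 = of_int m2" using Pred_G1[OF assms(2)] by blast
  obtain N1 where N1: "\<forall>n\<ge>N1. padic_abs p (Y n - c) \<le> real p powi -1" using Pred_G3[OF assms(1)] by blast
  obtain N2 where N2: "\<forall>n\<ge>N2. padic_abs p (Y n - c') \<le> real p powi -1" using Pred_G3[OF assms(2)] by blast
  define n where "n = max N1 N2"
  have "padic_abs p (c - c') \<le> max (padic_abs p (c - Y n)) (padic_abs p (Y n - c'))"
    by (rule pa_ultra_diff[OF p])
  moreover have "padic_abs p (c - Y n) \<le> real p powi -1" using N1 n_def pa_minus_commute[OF p] by simp
  moreover have "padic_abs p (Y n - c') \<le> real p powi -1" using N2 n_def by simp
  ultimately have pa: "padic_abs p (c - c') \<le> real p powi -1" by simp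
  have "(c - c') * of_nat p ^ (R1 + R2) = (c * of_nat p ^ R1) * of_nat p ^ R2 - (c' * of_nat p ^ R2) * of_nat p ^ R1"
    by (simp add: power_add algebra_simps)
  also have "\<dots> = of_int m1 * of_nat p ^ R2 - of_int m2 * of_nat p ^ R1" unfolding 1 2 ..
  also have "\<dots> = of_int (m1 * int p ^ R2 - m2 * int p ^ R1)" by simp
  finally have "(c - c') * of_nat p ^ (R1 + R2) = of_int (m1 * int p ^ R2 - m2 * int p ^ R1)" .
  moreover have "\<bar>c - c'\<bar> < of_nat p" using Pred_G2[OF assms(1)] Pred_G2[OF assms(2)] by linarith
  ultimately have "c - c' = 0" using key_zero pa by blast
  thus ?thesis by simp
qed

lemma Pred_s:
  assumes "padic_cauchy p Y"
  shows "Pred p Y (browkin_s p Y)"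
proof -
  have "\<exists>!c. Pred p Y c" using Pred_exists[OF p podd assms] Pred_unique by blast
  thus ?thesis unfolding browkin_s_Pred[OF p podd] by (rule theI')
qed

end


context
  fixes p :: nat
  assumes p: "prime p" and podd: "odd p"
begin

lemmas [simp] = pa_zero[OF p]

lemma pr0: "real p > 0" using p_gt1[OF p] by simp
lemma pr1: "real p > 1" using p_gt1[OF p] by simp

lemma s_small: "padic_cauchy p Y \<Longrightarrow> \<bar>browkin_s p Y\<bar> < of_nat p / 2"
  using Pred_G2[OF p podd Pred_s[OF p podd]] by blast

lemma s_close: "padic_cauchy p Y \<Longrightarrow> \<exists>N. \<forall>n\<ge>N. padic_abs p (Y n - browkin_s p Y) \<le> real p powi -1"
  using Pred_G3[OF p podd Pred_s[OF p podd]] by blast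

lemma s_nonzero:
  assumes Y: "padic_cauchy p Y" and nz: "browkin_s p Y \<noteq> 0"
  shows "padic_abs p (browkin_s p Y) \<ge> 1"
proof (rule ccontr)
  let ?b = "browkin_s p Y"
  assume "\<not> padic_abs p ?b \<ge> 1"
  hence "padic_abs p ?b < real p powi (- 0)" by simp
  hence "padic_abs p ?b \<le> real p powi (- 0 - 1)" by (rule pa_discrete[OF p])
  hence le: "padic_abs p ?b \<le> real p powi -1" by simp
  obtain R m where "?b * of_nat p ^ R = of_int m" using Pred_G1[OF p podd Pred_s[OF p podd Y]] by blast
  moreover have "\<bar>?b\<bar> < of_nat p" using s_small[OF Y] p_gt1[OF p] by linarith
  ultimately have "?b = 0" using key_zero[OF p podd] le by blast
  thus False using nz by simp
qed

lemma s_big: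
  assumes Y: "padic_cauchy p Y" and C: "C \<ge> real p" and N: "\<forall>n\<ge>N. padic_abs p (Y n) = C"
  shows "padic_abs p (browkin_s p Y) = C"
proof -
  let ?b = "browkin_s p Y"
  obtain N1 where N1: "\<forall>n\<ge>N1. padic_abs p (Y n - ?b) \<le> real p powi -1" using s_close[OF Y] by blast
  define n where "n = max N N1"
  have "real p powi -1 < 1" using pr1 by (simp add: power_int_minus inverse_less_1_iff)
  moreover have "padic_abs p (Y n - ?b) \<le> real p powi -1" using N1 n_def by simp
  moreover have "padic_abs p (Y n) = C" using N n_def by simp
  ultimately have lt: "padic_abs p (Y n - ?b) < padic_abs p (Y n)" using C pr1 by linarith
  have "?b = Y n - (Y n - ?b)" by simp
  hence "padic_abs p ?b = padic_abs p (Y n)" using pa_strict'[OF p lt] by simp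
  thus ?thesis using N n_def by simp
qed

lemma inv_step:
  assumes Y: "padic_cauchy p Y" and ne: "\<not> padic_eq p Y (\<lambda>_. c)"
    and cl: "\<exists>N. \<forall>n\<ge>N. padic_abs p (Y n - c) \<le> real p powi -1"
  shows "padic_cauchy p (\<lambda>n. inverse (Y n - c)) \<and>
         (\<exists>C\<ge>real p. \<exists>N. \<forall>n\<ge>N. padic_abs p (inverse (Y n - c)) = C)"
proof -
  define D where "D = (\<lambda>n. Y n - c)"
  have Dd: "D m - D n = Y m - Y n" for m n unfolding D_def by simp
  obtain \<epsilon> where e: "\<epsilon> > 0" "\<forall>N. \<exists>n\<ge>N. padic_abs p (D n) \<ge> \<epsilon>"
  proof -
    have "\<not> (\<forall>\<epsilon>>0. \<exists>N. \<forall>n\<ge>N. padic_abs p (D n) < \<epsilon>)"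
    proof
      assume h: "\<forall>\<epsilon>>0. \<exists>N. \<forall>n\<ge>N. padic_abs p (D n) < \<epsilon>"
      have "padic_eq p Y (\<lambda>_. c)" unfolding padic_eq_def
        by (rule LIMSEQ_I) (use h pa_nonneg[OF p] in \<open>simp add: D_def\<close>)
      thus False using ne by simp
    qed
    thus ?thesis using that by (meson not_le)
  qed
  obtain N1 where N1: "\<forall>m\<ge>N1. \<forall>n\<ge>N1. padic_abs p (D m - D n) < \<epsilon>"
    using Y e(1) unfolding padic_cauchy_def Dd by blast
  obtain N2 where N2: "\<forall>n\<ge>N2. padic_abs p (D n) \<le> real p powi -1" using cl unfolding D_def by blast
  obtain m where m: "m \<ge> max N1 N2" "padic_abs p (D m) \<ge> \<epsilon>" using e(2) by blast
  define C0 where "C0 = padic_abs p (D m)"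
  have C0pos: "C0 > 0" using m e(1) unfolding C0_def by simp
  have C0le: "C0 \<le> real p powi -1" using N2 m unfolding C0_def by simp
  have Deq: "padic_abs p (D n) = C0" if "n \<ge> N1" for n
  proof -
    have "padic_abs p (D n - D m) < C0" using N1 that m unfolding C0_def by fastforce
    hence "padic_abs p (D m + (D n - D m)) = C0" unfolding C0_def by (rule pa_strict[OF p])
    thus ?thesis by simp
  qed
  have Dnz: "D n \<noteq> 0" if "n \<ge> N1" for n using Deq[OF that] C0pos by auto
  have inv: "padic_abs p (inverse (D n)) = inverse C0" if "n \<ge> N1" for n
    using Deq[OF that] pa_inverse[OF p] by simp
  have Cge: "inverse C0 \<ge> real p"
  proof -
    have "inverse (real p powi -1) \<le> inverse C0" using C0pos C0le by (intro le_imp_inverse_le)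
    thus ?thesis by (simp add: power_int_minus)
  qed
  have cauchy: "padic_cauchy p (\<lambda>n. inverse (Y n - c))"
    unfolding padic_cauchy_def
  proof (intro allI impI)
    fix \<delta> :: real assume "\<delta> > 0"
    hence "\<delta> * C0 * C0 > 0" using C0pos by simp
    then obtain N3 where N3: "\<forall>m\<ge>N3. \<forall>n\<ge>N3. padic_abs p (D m - D n) < \<delta> * C0 * C0"
      using Y unfolding padic_cauchy_def Dd by blast
    have "\<forall>a\<ge>max N1 N3. \<forall>b\<ge>max N1 N3. padic_abs p (inverse (Y a - c) - inverse (Y b - c)) < \<delta>"
    proof (intro allI impI)
      fix a b assume a: "a \<ge> max N1 N3" and b: "b \<ge> max N1 N3"
      have "inverse (D a) - inverse (D b) = (D b - D a) * (inverse (D a) * inverse (D b))"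
        using Dnz a b by (simp add: field_simps)
      hence "padic_abs p (inverse (D a) - inverse (D b)) = padic_abs p (D b - D a) * (inverse C0 * inverse C0)"
        using pa_mult[OF p] inv a b by simp
      also have "\<dots> < \<delta> * C0 * C0 * (inverse C0 * inverse C0)"
        using N3 a b C0pos by (intro mult_strict_right_mono) auto
      also have "\<dots> = \<delta>" using C0pos by (simp add: field_simps)
      finally show "padic_abs p (inverse (Y a - c) - inverse (Y b - c)) < \<delta>" unfolding D_def .
    qed
    thus "\<exists>N. \<forall>m\<ge>N. \<forall>n\<ge>N. padic_abs p (inverse (Y m - c) - inverse (Y n - c)) < \<delta>" by blast
  qed
  show ?thesis using cauchy Cge inv unfolding D_def by blast
qed

lemma alpha_props:
  assumes X: "padic_cauchy p X" and inf: "browkin_infinite p X"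
  shows "padic_cauchy p (browkin_alpha p X i) \<and>
         (i \<ge> 1 \<longrightarrow> (\<exists>C\<ge>real p. \<exists>N. \<forall>n\<ge>N. padic_abs p (browkin_alpha p X i n) = C))"
proof (induction i)
  case 0 thus ?case using X by simp
next
  case (Suc i)
  let ?Y = "browkin_alpha p X i"
  have c: "padic_cauchy p ?Y" using Suc by blast
  have ne: "\<not> padic_eq p ?Y (\<lambda>_. browkin_s p ?Y)" using inf unfolding browkin_infinite_def browkin_b_def by blast
  have "padic_cauchy p (\<lambda>n. inverse (?Y n - browkin_s p ?Y)) \<and>
         (\<exists>C\<ge>real p. \<exists>N. \<forall>n\<ge>N. padic_abs p (inverse (?Y n - browkin_s p ?Y)) = C)"
    by (rule inv_step[OF c ne s_close[OF c]])
  thus ?case by simp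
qed

lemma b_props:
  assumes X: "padic_cauchy p X" and inf: "browkin_infinite p X"
  shows "\<bar>browkin_b p X i\<bar> < of_nat p / 2"
    and "browkin_b p X 0 = 0 \<or> padic_abs p (browkin_b p X 0) \<ge> 1"
    and "i \<ge> 1 \<Longrightarrow> padic_abs p (browkin_b p X i) \<ge> real p"
proof -
  show "\<bar>browkin_b p X i\<bar> < of_nat p / 2"
    unfolding browkin_b_def using s_small alpha_props[OF X inf] by blast
  show "browkin_b p X 0 = 0 \<or> padic_abs p (browkin_b p X 0) \<ge> 1"
    unfolding browkin_b_def using s_nonzero alpha_props[OF X inf] by blast
  assume "i \<ge> 1"
  then obtain C N where "C \<ge> real p" "\<forall>n\<ge>N. padic_abs p (browkin_alpha p X i n) = C"
    using alpha_props[OF X inf, of i] by blast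
  thus "padic_abs p (browkin_b p X i) \<ge> real p"
    unfolding browkin_b_def using s_big alpha_props[OF X inf, of i] by simp
qed

end


lemma ratio_lemma:
  fixes P Q :: "nat \<Rightarrow> real" and p :: real
  assumes p3: "p \<ge> 3"
    and Ppos: "\<And>k. k \<ge> k1 \<Longrightarrow> P k > 0"
    and Pgrow: "\<And>k. k \<ge> k1 \<Longrightarrow> P (k+1) \<ge> p * P k"
    and Qrec: "\<And>k. k \<ge> k1 \<Longrightarrow> Q (k+2) \<le> (p/2) * Q (k+1) + Q k"
    and Qnn: "\<And>k. Q k \<ge> 0"
  shows "\<exists>N. \<forall>n\<ge>N. Q n < P n"
proof -
  define R where "R = (\<lambda>k. Q k / P k)"
  have Rnn: "R k \<ge> 0" if "k \<ge> k1" for k unfolding R_def using Qnn Ppos[OF that] by simp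
  have Rrec: "R (k+2) \<le> R (k+1) / 2 + R k / 9" if k: "k \<ge> k1" for k
  proof -
    have c: "P k > 0" using Ppos k by simp
    have a: "P (k+1) \<ge> p * P k" using Pgrow k by simp
    have a2: "P (k+2) \<ge> p * P (k+1)" using Pgrow[of "k+1"] k by simp
    have pa: "P (k+1) > 0" "P (k+2) > 0" using Ppos k by auto
    have "R (k+2) \<le> ((p/2) * Q (k+1) + Q k) / P (k+2)"
      unfolding R_def using Qrec[OF k] pa by (simp add: divide_right_mono)
    also have "\<dots> = (p/2) * (Q (k+1) / P (k+2)) + Q k / P (k+2)" by (simp add: add_divide_distrib)
    also have "Q (k+1) / P (k+2) \<le> Q (k+1) / (p * P (k+1))"
      using a2 pa p3 Qnn by (intro divide_left_mono) auto
    also have "Q k / P (k+2) \<le> Q k / (9 * P k)"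
    proof (intro divide_left_mono)
      have "9 * P k \<le> p * p * P k" using p3 c by (intro mult_right_mono) (auto simp: mult_mono[of 3 p 3 p, simplified])
      also have "\<dots> \<le> p * P (k+1)" using a p3 by simp
      also have "\<dots> \<le> P (k+2)" using a2 .
      finally show "9 * P k \<le> P (k+2)" .
    qed (use Qnn c pa(2) in simp_all)
    finally have "R (k+2) \<le> (p/2) * (Q (k+1) / (p * P (k+1))) + Q k / (9 * P k)"
      using p3 by simp
    also have "\<dots> = R (k+1) / 2 + R k / 9" unfolding R_def using p3 pa c by (simp add: field_simps)
    finally show ?thesis .
  qed
  define U where "U = (\<lambda>k. R (k+1) + R k / 4)"
  have Ustep: "U (k+1) \<le> (3/4) * U k" if k: "k \<ge> k1" for k
  proof -
    have "U (k+1) = R (k+2) + R (k+1) / 4" unfolding U_def by simp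
    also have "\<dots> \<le> R (k+1) / 2 + R k / 9 + R (k+1) / 4" using Rrec[OF k] by simp
    also have "\<dots> \<le> (3/4) * U k" unfolding U_def using Rnn[OF k] by simp
    finally show ?thesis .
  qed
  have Upow: "U (k1 + j) \<le> (3/4)^j * U k1" for j
  proof (induction j)
    case 0 thus ?case by simp
  next
    case (Suc j)
    have "U (k1 + Suc j) \<le> (3/4) * U (k1 + j)" using Ustep[of "k1 + j"] by simp
    also have "\<dots> \<le> (3/4) * ((3/4)^j * U k1)" using Suc by simp
    finally show ?case by simp
  qed
  have U0: "U k1 \<ge> 0" unfolding U_def using Rnn[of k1] Rnn[of "k1+1"] by simp
  obtain j0 where j0: "(3/4::real)^j0 < 1 / (U k1 + 1)"
    using real_arch_pow_inv[of "1 / (U k1 + 1)" "3/4"] U0 by auto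
  have "\<forall>n\<ge>k1 + j0 + 1. Q n < P n"
  proof (intro allI impI)
    fix n assume n: "n \<ge> k1 + j0 + 1"
    define j where "j = n - 1 - k1"
    have nj: "n = k1 + j + 1" "j \<ge> j0" using n unfolding j_def by auto
    have "R n \<le> U (k1 + j)" unfolding U_def nj(1) using Rnn[of "k1 + j"] by simp
    also have "\<dots> \<le> (3/4)^j * U k1" by (rule Upow)
    also have "\<dots> \<le> (3/4)^j0 * U k1" using nj(2) U0 by (intro mult_right_mono power_decreasing) auto
    also have "\<dots> \<le> 1 / (U k1 + 1) * U k1" using j0 U0 by (intro mult_right_mono) auto
    also have "\<dots> < 1" using U0 by (simp add: field_simps)
    finally have "Q n / P n < 1" unfolding R_def .
    moreover have "P n > 0" using Ppos n by simp
    ultimately show "Q n < P n" by (simp add: divide_less_eq)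
  qed
  thus ?thesis by blast
qed

context
  fixes p :: nat
  assumes p: "prime p" and podd: "odd p"
begin

lemmas [simp] = pa_zero[OF p]

lemma pa_one: "padic_abs p 1 = 1"
  by (simp add: padic_abs_def padic_val_def)

lemma growth:
  fixes X b :: "nat \<Rightarrow> rat"
  assumes rec: "\<And>k. X (k+2) = b k * X (k+1) + X k"
    and bp: "\<And>k. k \<ge> k0 \<Longrightarrow> padic_abs p (b k) \<ge> real p"
    and ba: "\<And>k. \<bar>b k\<bar> < of_nat p / 2"
    and base: "padic_abs p (X (k0+1)) \<ge> real p * padic_abs p (X k0)" "X (k0+1) \<noteq> 0"
  shows "\<exists>N. \<forall>n\<ge>N. real_of_rat \<bar>X n\<bar> < padic_abs p (X n)"
proof -
  let ?P = "\<lambda>k. padic_abs p (X k)"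
  have p1: "real p > 1" using p_gt1[OF p] by simp
  have st: "?P (k0+j+1) \<ge> real p * ?P (k0+j) \<and> ?P (k0+j+1) > 0" for j
  proof (induction j)
    case 0 thus ?case using base pa_pos[OF p] by simp
  next
    case (Suc j)
    let ?k = "k0 + j"
    have bk: "padic_abs p (b ?k) \<ge> real p" using bp by simp
    have Pk: "?P ?k \<ge> 0" using pa_nonneg[OF p] by simp
    have "?P ?k \<le> ?P (?k+1) / real p" using Suc p1 by (simp add: field_simps mult.commute)
    also have "\<dots> < ?P (?k+1)" using Suc p1 by (simp add: divide_less_eq)
    also have "\<dots> < real p * ?P (?k+1)" using Suc p1 by simp
    also have "\<dots> \<le> padic_abs p (b ?k) * ?P (?k+1)" using bk Suc by (intro mult_right_mono) auto
    also have "\<dots> = padic_abs p (b ?k * X (?k+1))" using pa_mult[OF p] by simp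
    finally have lt: "padic_abs p (X ?k) < padic_abs p (b ?k * X (?k+1))" .
    have "?P (?k+2) = padic_abs p (b ?k * X (?k+1))" using rec[of ?k] pa_strict[OF p lt] by simp
    also have "\<dots> = padic_abs p (b ?k) * ?P (?k+1)" using pa_mult[OF p] by simp
    finally have e: "?P (?k+2) = padic_abs p (b ?k) * ?P (?k+1)" .
    have "real p * ?P (?k+1) \<le> ?P (?k+2)" unfolding e using bk Suc by (intro mult_right_mono) auto
    moreover have "?P (?k+2) > 0" unfolding e using bk Suc p1 by simp
    ultimately show ?case by (simp add: add.commute add.left_commute)
  qed
  have Ppos: "?P k > 0" if "k \<ge> k0+1" for k
    using st[of "k - k0 - 1"] that by simp
  have Pgrow: "?P (k+1) \<ge> real p * ?P k" if "k \<ge> k0+1" for k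
    using st[of "k - k0"] that by simp
  have Qrec: "real_of_rat \<bar>X (k+2)\<bar> \<le> (real p / 2) * real_of_rat \<bar>X (k+1)\<bar> + real_of_rat \<bar>X k\<bar>" for k
  proof -
    have "\<bar>X (k+2)\<bar> \<le> \<bar>b k\<bar> * \<bar>X (k+1)\<bar> + \<bar>X k\<bar>" using rec[of k] by (simp add: abs_triangle_ineq[THEN order_trans] abs_mult)
    also have "\<dots> \<le> (of_nat p / 2) * \<bar>X (k+1)\<bar> + \<bar>X k\<bar>" using ba[of k] by (intro add_right_mono mult_right_mono) auto
    finally have "real_of_rat \<bar>X (k+2)\<bar> \<le> real_of_rat ((of_nat p / 2) * \<bar>X (k+1)\<bar> + \<bar>X k\<bar>)"
      by (simp only: of_rat_less_eq)
    thus ?thesis by (simp add: of_rat_add of_rat_mult of_rat_divide)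
  qed
  show ?thesis
    by (rule ratio_lemma[of "real p" "k0+1" ?P "\<lambda>k. real_of_rat \<bar>X k\<bar>"])
       (use p3[OF p podd] Ppos Pgrow Qrec in auto)
qed

end


theorem lemma2:
  fixes p :: nat and X :: "nat \<Rightarrow> rat"
  assumes "prime p" and "odd p"
    and "padic_cauchy p X"
    and "browkin_infinite p X"
  shows "\<exists>N. \<forall>n\<ge>N.
           real_of_rat \<bar>cfA (browkin_b p X) (n + 2)\<bar> < padic_abs p (cfA (browkin_b p X) (n + 2)) \<and>
           real_of_rat \<bar>cfB (browkin_b p X) (n + 2)\<bar> < padic_abs p (cfB (browkin_b p X) (n + 2))"
proof -
  note p = assms(1) and podd = assms(2)
  let ?b = "browkin_b p X"
  have ba: "\<And>k. \<bar>?b k\<bar> < of_nat p / 2" using b_props(1)[OF p podd assms(3,4)] by blast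
  have bp: "\<And>k. k \<ge> 2 \<Longrightarrow> padic_abs p (?b k) \<ge> real p" using b_props(3)[OF p podd assms(3,4)] by simp
  have b1: "padic_abs p (?b 1) \<ge> real p" using b_props(3)[OF p podd assms(3,4)] by simp
  have b0: "?b 0 = 0 \<or> padic_abs p (?b 0) \<ge> 1" using b_props(2)[OF p podd assms(3,4)] .
  have p1: "real p > 1" using p_gt1[OF p] by simp
  have recA: "\<And>k. cfA ?b (k+2) = ?b k * cfA ?b (k+1) + cfA ?b k" by simp
  have recB: "\<And>k. cfB ?b (k+2) = ?b k * cfB ?b (k+1) + cfB ?b k" by simp
  have b1nz: "?b 1 \<noteq> 0" using b1 p1 pa_zero[OF p] by auto
  obtain NB where NB: "\<forall>n\<ge>NB. real_of_rat \<bar>cfB ?b n\<bar> < padic_abs p (cfB ?b n)"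
  proof -
    have "cfB ?b 3 = ?b 1" "cfB ?b 2 = 1" by (simp_all add: numeral_3_eq_3 numeral_2_eq_2)
    hence "padic_abs p (cfB ?b (2+1)) \<ge> real p * padic_abs p (cfB ?b 2)" "cfB ?b (2+1) \<noteq> 0"
      using b1 b1nz pa_one[OF p podd] by simp_all
    thus ?thesis using growth[OF p podd recB bp ba] that by blast
  qed
  obtain NA where NA: "\<forall>n\<ge>NA. real_of_rat \<bar>cfA ?b n\<bar> < padic_abs p (cfA ?b n)"
  proof -
    have A3: "cfA ?b 3 = ?b 1 * ?b 0 + 1" "cfA ?b 2 = ?b 0" by (simp_all add: numeral_3_eq_3 numeral_2_eq_2)
    have "padic_abs p (cfA ?b (2+1)) \<ge> real p * padic_abs p (cfA ?b 2) \<and> cfA ?b (2+1) \<noteq> 0"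
    proof (cases "?b 0 = 0")
      case True thus ?thesis using A3 pa_one[OF p podd] pa_zero[OF p] by simp
    next
      case False
      hence b0': "padic_abs p (?b 0) \<ge> 1" using b0 by simp
      have "padic_abs p (?b 1 * ?b 0) = padic_abs p (?b 1) * padic_abs p (?b 0)" by (rule pa_mult[OF p])
      moreover have "padic_abs p (?b 1) * padic_abs p (?b 0) \<ge> real p * padic_abs p (?b 0)"
        using b1 b0' by (intro mult_right_mono) auto
      moreover have "real p * padic_abs p (?b 0) \<ge> real p" using b0' p1 by simp
      ultimately have lt: "padic_abs p 1 < padic_abs p (?b 1 * ?b 0)" using pa_one[OF p podd] p1 by linarith
      have e: "padic_abs p (cfA ?b 3) = padic_abs p (?b 1 * ?b 0)" unfolding A3 by (rule pa_strict[OF p lt])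
      have "padic_abs p (cfA ?b 3) \<ge> real p * padic_abs p (cfA ?b 2)"
        using e A3 \<open>padic_abs p (?b 1 * ?b 0) = _\<close> \<open>padic_abs p (?b 1) * padic_abs p (?b 0) \<ge> _\<close> by simp
      moreover have "cfA ?b 3 \<noteq> 0" using e lt pa_zero[OF p] pa_one[OF p podd] by (metis less_numeral_extra(4) less_irrefl pa_nonneg[OF p] order.strict_trans1)
      ultimately show ?thesis by simp
    qed
    thus ?thesis using growth[OF p podd recA bp ba] that by blast
  qed
  show ?thesis
  proof (intro exI[of _ "max NA NB"] allI impI conjI)
    fix n assume n: "n \<ge> max NA NB"
    hence "n + 2 \<ge> NA" "n + 2 \<ge> NB" by auto
    thus "real_of_rat \<bar>cfA ?b (n + 2)\<bar> < padic_abs p (cfA ?b (n + 2))"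
      "real_of_rat \<bar>cfB ?b (n + 2)\<bar> < padic_abs p (cfB ?b (n + 2))"
      using NA NB by blast+
  qed
qed

end
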